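(* Let $a<b$ be integers, $\sigma=(\sigma_x)_{x\in[a,b]\cap\mathbb{Z}}$ arbitrary strictly positive deterministic numbers, and $X^{a,b}$ the inhomogeneous CTRW on $[a,b]\cap\mathbb{Z}$ in the trapping landscape $\sigma$. For each $x\in[a,b)\cap\mathbb{Z}$, $z\in[x,b)\cap\mathbb{Z}$ and $t>0$, \[ P^{a,b}_x(\tau_b\le t)\le \frac{t}{2(b-z)\sigma_z}. \] Moreover, for each $x\in(a,b)\cap\mathbb{Z}$ and $t>0$, \[ P^{a,b}_x(\tau\le t)\le\frac{t}{\min\{x-a,b-x\}\,\sigma_x}. \]
   Context: For integers $a<b$ and positive numbers $(\sigma_x)_{x\in[a,b]\cap\mathbb{Z}}$, the inhomogeneous CTRW $X^{a,b}$ on $[a,b]\cap\mathbb{Z}$ in the trapping landscape $\sigma$ is the continuous-time Markov chain on $[a,b]\cap\mathbb{Z}$ which jumps from $x$ to each nearest neighbour $y$ of $x$ within $[a,b]\cap\mathbb{Z}$ at rate $1/(2\sigma_x)$ (reflecting at $a$ and $b$). $P^{a,b}_x$ is its law started from $x$. $\tau_a:=\inf\{s:X^{a,b}_s=a\}$, $\tau_b:=\inf\{s:X^{a,b}_s=b\}$, $\tau:=\min\{\tau_a,\tau_b\}$. *)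

theory Defs
  imports "HOL-Probability.Probability"
begin

text \<open>Construction of the inhomogeneous CTRW on the integer interval from a to b
(reflecting at a and b) by the standard jump-chain / holding-time construction.\<close>

definition ctrw_step_measure :: "(bool \<times> real) measure" where
  "ctrw_step_measure =
     measure_pmf (bernoulli_pmf (1/2)) \<Otimes>\<^sub>M density lborel (exponential_density 1)"

definition ctrw_space :: "(nat \<Rightarrow> bool \<times> real) measure" where
  "ctrw_space = PiM UNIV (\<lambda>_::nat. ctrw_step_measure)"

definition ctrw_next :: "int \<Rightarrow> int \<Rightarrow> int \<Rightarrow> bool \<Rightarrow> int" where
  "ctrw_next a b y c =
     (if y = a then a + 1 else if y = b then b - 1 else if c then y + 1 else y - 1)"

fun ctrw_chain :: "int \<Rightarrow> int \<Rightarrow> int \<Rightarrow> (nat \<Rightarrow> bool \<times> real) \<Rightarrow> nat \<Rightarrow> int" where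
  "ctrw_chain a b x \<omega> 0 = x"
| "ctrw_chain a b x \<omega> (Suc n) = ctrw_next a b (ctrw_chain a b x \<omega> n) (fst (\<omega> n))"

text \<open>Holding time at y: total jump rate is 1/sigma y at interior sites and
1/(2 sigma y) at the endpoints, so the holding time is (mean) times an Exp(1) variable.\<close>
definition ctrw_hold :: "int \<Rightarrow> int \<Rightarrow> (int \<Rightarrow> real) \<Rightarrow> int \<Rightarrow> real \<Rightarrow> real" where
  "ctrw_hold a b \<sigma> y e = (if y = a \<or> y = b then 2 * \<sigma> y else \<sigma> y) * e"

definition ctrw_jump_time ::
  "int \<Rightarrow> int \<Rightarrow> (int \<Rightarrow> real) \<Rightarrow> int \<Rightarrow> (nat \<Rightarrow> bool \<times> real) \<Rightarrow> nat \<Rightarrow> real" where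
  "ctrw_jump_time a b \<sigma> x \<omega> n =
     (\<Sum>k<n. ctrw_hold a b \<sigma> (ctrw_chain a b x \<omega> k) (snd (\<omega> k)))"

text \<open>P_x^{a,b}(tau_S \<le> t), where tau_S is the hitting time of the set S:
the process X sits at ctrw_chain n on [jump_time n, jump_time (n+1)), so
tau_S \<le> t iff some n has chain value in S and jump time \<le> t.\<close>
definition ctrw_hit_prob ::
  "int \<Rightarrow> int \<Rightarrow> (int \<Rightarrow> real) \<Rightarrow> int \<Rightarrow> int set \<Rightarrow> real \<Rightarrow> real" where
  "ctrw_hit_prob a b \<sigma> x S t =
     measure ctrw_space
       {\<omega> \<in> space ctrw_space. \<exists>n. ctrw_chain a b x \<omega> n \<in> S \<and> ctrw_jump_time a b \<sigma> x \<omega> n \<le> t}"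

end

theory Submission
  imports Defs
begin

definition hh :: "real \<Rightarrow> real \<Rightarrow> real \<Rightarrow> real" where
  "hh lam c s = (if s < 0 then 0 else 1 - c * exp (- lam * s))"

definition Fp :: "real \<Rightarrow> real \<Rightarrow> real \<Rightarrow> real \<Rightarrow> real \<Rightarrow> real" where
  "Fp H lam c s e = (if lam * H = 1 then - exp (- e) - c * exp (- lam * s) * e
     else - exp (- e) - c * exp (- lam * s) * exp ((lam * H - 1) * e) / (lam * H - 1))"

definition Kf :: "real \<Rightarrow> real \<Rightarrow> real \<Rightarrow> real \<Rightarrow> real" where
  "Kf H lam c s = (if s < 0 then 0 else Fp H lam c s (s / H) - Fp H lam c s 0)"

lemma Kf_int:
  assumes H: "0 < H" and lam: "0 \<le> lam" and c: "0 \<le> c" "c \<le> 1"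
  shows "(\<integral>\<^sup>+e. ennreal (exponential_density 1 e) * ennreal (hh lam c (s - H * e)) \<partial>lborel)
         = ennreal (Kf H lam c s) \<and> 0 \<le> Kf H lam c s"
proof (cases "s < 0")
  case True
  have "\<And>e. ennreal (exponential_density 1 e) * ennreal (hh lam c (s - H * e)) = 0"
  proof -
    fix e show "ennreal (exponential_density 1 e) * ennreal (hh lam c (s - H * e)) = 0"
    proof (cases "e < 0")
      case True thus ?thesis by (simp add: exponential_density_def)
    next
      case False
      then have "s - H * e < 0" using \<open>s < 0\<close> H by (smt (verit) mult_nonneg_nonneg)
      thus ?thesis by (simp add: hh_def)
    qed
  qed
  then have "(\<integral>\<^sup>+e. ennreal (exponential_density 1 e) * ennreal (hh lam c (s - H * e)) \<partial>lborel)
     = (\<integral>\<^sup>+(e::real). 0 \<partial>lborel)" by (simp only:)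
  thus ?thesis using True by (simp add: Kf_def)
next
  case False
  define r where "r = s / H"
  have r0: "0 \<le> r" using False H by (simp add: r_def)
  define f where "f e = exp (- e) - c * exp (- lam * s) * exp ((lam * H - 1) * e)" for e
  have exid: "exp (- e) * exp (- lam * (s - H * e)) = exp (- lam * s) * exp ((lam * H - 1) * e)" for e
  proof -
    have "- e + - lam * (s - H * e) = - lam * s + (lam * H - 1) * e" by algebra
    thus ?thesis by (simp only: mult_exp_exp)
  qed
  have eq: "ennreal (exponential_density 1 e) * ennreal (hh lam c (s - H * e))
      = ennreal (f e) * indicator {0..r} e" for e
  proof (cases "e < 0")
    case True thus ?thesis by (simp add: exponential_density_def)
  next
    case ge: False
    show ?thesis
    proof (cases "e \<le> r")
      case True
      then have "H * e \<le> s" using H by (simp add: r_def field_simps)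
      then have "hh lam c (s - H * e) = 1 - c * exp (- lam * (s - H * e))"
        by (simp add: hh_def)
      moreover have "exp (- e) * (1 - c * exp (- lam * (s - H * e))) = f e"
        using exid[of e] by (simp add: f_def algebra_simps)
      ultimately show ?thesis using ge True
        by (simp add: exponential_density_def ennreal_mult'[symmetric] indicator_def)
    next
      case False
      then have "s - H * e < 0" using H by (simp add: r_def field_simps)
      thus ?thesis using False by (simp add: hh_def indicator_def)
    qed
  qed
  have fm: "f \<in> borel_measurable borel" unfolding f_def by measurable
  have der: "DERIV (Fp H lam c s) e :> f e" if e: "e \<in> {0..r}" for e
    proof (cases "lam * H = 1")
      case True
      have "DERIV (\<lambda>e. - exp (- e) - c * exp (- lam * s) * e) e :> exp (- e) - c * exp (- lam * s)"
        by (auto intro!: derivative_eq_intros)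
      thus ?thesis using True by (simp add: Fp_def[abs_def] f_def)
    next
      case False
      define k where "k = lam * H - 1"
      have k: "k \<noteq> 0" using False by (simp add: k_def)
      have d1: "DERIV (\<lambda>e. exp (k * e) / k) e :> exp (k * e)"
        using k by (auto intro!: derivative_eq_intros)
      have d2: "DERIV (\<lambda>e. - exp (- e)) e :> exp (- e)"
        by (auto intro!: derivative_eq_intros)
      have "DERIV (\<lambda>e. - exp (- e) - (c * exp (- lam * s)) * (exp (k * e) / k)) e :>
          exp (- e) - (c * exp (- lam * s)) * exp (k * e)"
        by (intro DERIV_diff DERIV_cmult d1 d2)
      moreover have "Fp H lam c s = (\<lambda>e. - exp (- e) - (c * exp (- lam * s)) * (exp (k * e) / k))"
        using False by (simp add: Fp_def fun_eq_iff k_def)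
      ultimately show ?thesis by (simp add: f_def k_def)
    qed
  have fnn: "0 \<le> f e" if e: "e \<in> {0..r}" for e
  proof -
    have "H * e \<le> s" using e H by (simp add: r_def field_simps)
    then have "exp (- lam * (s - H * e)) \<le> 1" using lam by simp
    then have "c * exp (- lam * (s - H * e)) \<le> 1" using c
      by (metis mult_le_one exp_ge_zero)
    then have "0 \<le> exp (- e) * (1 - c * exp (- lam * (s - H * e)))" by simp
    also have "exp (- e) * (1 - c * exp (- lam * (s - H * e))) = f e"
        using exid[of e] by (simp add: f_def algebra_simps)
    finally show "0 \<le> f e" .
  qed
  note I1 = nn_integral_FTC_Icc[OF fm der fnn r0]
  note I2 = integral_FTC_Icc_nonneg[OF fm der fnn r0]
  have "0 \<le> (\<integral>e. f e * indicator {0..r} e \<partial>lborel)"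
    by (rule Bochner_Integration.integral_nonneg) (auto simp: indicator_def fnn)
  thus ?thesis using False I1 I2 by (simp add: eq Kf_def r_def)
qed

lemma Kf_le:
  assumes H: "0 < H" and lam: "0 \<le> lam" and c: "0 \<le> c" "c \<le> 1" and c': "0 \<le> c'"
    and sup: "c * (1 - lam * H) \<le> c'" and s: "0 \<le> s"
  shows "Kf H lam c' s \<le> 1 - c * exp (- lam * s)"
proof -
  define X where "X = exp (- (s / H))"
  define Y where "Y = exp (- lam * s)"
  define mu where "mu = lam * H"
  have X0: "0 < X" and Y0: "0 < Y" by (simp_all add: X_def Y_def)
  have r0: "0 \<le> s / H" using s H by simp
  have XY: "Y * exp ((mu - 1) * (s / H)) = X"
  proof -
    have "- lam * s + (mu - 1) * (s / H) = - (s / H)" using H by (simp add: mu_def field_simps)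
    thus ?thesis by (simp only: X_def Y_def mult_exp_exp)
  qed
  show ?thesis
  proof (cases "mu = 1")
    case True
    then have "X = Y" using XY by simp
    have "Kf H lam c' s = 1 - X - c' * Y * (s / H)"
      using True s by (simp add: Kf_def Fp_def mu_def X_def Y_def)
    also have "\<dots> \<le> 1 - c * Y" using \<open>X = Y\<close> c c' r0 Y0
      by (smt (verit) mult_nonneg_nonneg mult_left_le_one_le)
    finally show ?thesis by (simp add: Y_def)
  next
    case False
    have f1: "Fp H lam c' s (s/H) = - X - c' * (Y * exp ((mu - 1) * (s / H))) / (mu - 1)"
      using False by (simp add: Fp_def mu_def X_def Y_def mult.assoc)
    have f2: "Fp H lam c' s 0 = -1 - c' * Y / (mu - 1)"
      using False by (simp add: Fp_def mu_def Y_def)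
    have "Kf H lam c' s = (- X - c' * X / (mu - 1)) - (-1 - c' * Y / (mu - 1))"
      using s f1 f2 XY by (simp add: Kf_def)
    also have "\<dots> = 1 - X - c' * (X - Y) / (mu - 1)"
      by (simp add: diff_divide_distrib right_diff_distrib)
    finally have "Kf H lam c' s = 1 - X - c' * (X - Y) / (mu - 1)" .
    also have "\<dots> \<le> 1 - c * Y"
    proof (cases "mu < 1")
      case True
      have "(lam * H) * s \<le> 1 * s" using True s by (intro mult_right_mono) (auto simp: mu_def)
      then have "lam * s \<le> s / H" using H by (simp add: field_simps)
      then have "X \<le> Y" by (simp add: X_def Y_def)
      define k where "k = c' / (1 - mu)"
      have k: "c \<le> k" using sup True by (simp add: k_def mu_def field_simps)
      have eq: "c' * (X - Y) / (mu - 1) = k * (Y - X)" using True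
        by (simp add: k_def field_simps)
      show ?thesis
      proof (cases "k \<le> 1")
        case True
        have "c * Y \<le> k * Y" using k Y0 by simp
        moreover have "0 \<le> (1 - k) * X" using True X0 by simp
        ultimately show ?thesis unfolding eq by (simp add: algebra_simps)
      next
        case False
        have "(k - 1) * X \<le> (k - 1) * Y" using False \<open>X \<le> Y\<close> by simp
        moreover have "c * Y \<le> Y" using c Y0 by simp
        ultimately show ?thesis unfolding eq by (simp add: algebra_simps)
      qed
    next
      case False
      have "1 * s \<le> (lam * H) * s" using False s by (intro mult_right_mono) (auto simp: mu_def)
      then have "s / H \<le> lam * s" using H by (simp add: field_simps)
      then have "Y \<le> X" by (simp add: X_def Y_def)
      have "0 \<le> c' * (X - Y) / (mu - 1)" using False \<open>mu \<noteq> 1\<close> \<open>Y \<le> X\<close> c' by simp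
      moreover have "c * Y \<le> Y" using c Y0 by simp
      ultimately show ?thesis using \<open>Y \<le> X\<close> by simp
    qed
    finally show ?thesis by (simp add: Y_def)
  qed
qed

lemma space_step[simp]: "space ctrw_step_measure = UNIV"
  by (simp add: ctrw_step_measure_def space_pair_measure)

lemma sets_step: "sets ctrw_step_measure = sets (count_space UNIV \<Otimes>\<^sub>M borel)"
  unfolding ctrw_step_measure_def by (intro sets_pair_measure_cong) auto

lemma space_ctrw[simp]: "space ctrw_space = UNIV"
  by (simp add: ctrw_space_def space_PiM)

lemma prob_step: "prob_space ctrw_step_measure"
  unfolding ctrw_step_measure_def
  by (intro prob_space_pair prob_space_measure_pmf prob_space_exponential_density) simp

interpretation SQ: sequence_space ctrw_step_measure
  by (simp add: sequence_space_def product_prob_space_def product_sigma_finite_def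
    prob_step prob_space_imp_sigma_finite product_prob_space_axioms_def)

lemma meas_fst_comp[measurable]: "(\<lambda>\<omega>. fst (\<omega> k)) \<in> measurable ctrw_space (count_space UNIV)"
proof -
  have "(\<lambda>\<omega>. \<omega> k) \<in> measurable ctrw_space ctrw_step_measure"
    unfolding ctrw_space_def by (rule measurable_component_singleton) simp
  moreover have "fst \<in> measurable ctrw_step_measure (count_space UNIV)"
    by (simp add: measurable_cong_sets[OF sets_step refl])
  ultimately show ?thesis by (rule measurable_compose)
qed

lemma meas_snd_comp[measurable]: "(\<lambda>\<omega>. snd (\<omega> k)) \<in> borel_measurable ctrw_space"
proof -
  have "(\<lambda>\<omega>. \<omega> k) \<in> measurable ctrw_space ctrw_step_measure"
    unfolding ctrw_space_def by (rule measurable_component_singleton) simp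
  moreover have "snd \<in> borel_measurable ctrw_step_measure"
    by (simp add: measurable_cong_sets[OF sets_step refl])
  ultimately show ?thesis by (rule measurable_compose)
qed

lemma meas_chain[measurable]: "(\<lambda>\<omega>. ctrw_chain a b x \<omega> k) \<in> measurable ctrw_space (count_space UNIV)"
proof (induction k)
  case 0 thus ?case by simp
next
  case (Suc k)
  show ?case unfolding ctrw_chain.simps
    by (rule measurable_compose_countable'[OF _ Suc]) simp_all
qed

lemma meas_jt[measurable]: "(\<lambda>\<omega>. ctrw_jump_time a b \<sigma> x \<omega> n) \<in> borel_measurable ctrw_space"
  unfolding ctrw_jump_time_def
proof (intro borel_measurable_sum)
  fix k
  show "(\<lambda>\<omega>. ctrw_hold a b \<sigma> (ctrw_chain a b x \<omega> k) (snd (\<omega> k))) \<in> borel_measurable ctrw_space"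
    by (rule measurable_compose_countable'[OF _ meas_chain]) (simp_all add: ctrw_hold_def)
qed

definition hitset where
  "hitset a b \<sigma> x S t n = {\<omega> \<in> space ctrw_space. \<exists>k\<le>n. ctrw_chain a b x \<omega> k \<in> S \<and> ctrw_jump_time a b \<sigma> x \<omega> k \<le> t}"

lemma hitset_sets[measurable]: "hitset a b \<sigma> x S t n \<in> sets ctrw_space"
  unfolding hitset_def by measurable

lemma chain_Suc': "ctrw_chain a b x \<omega> (Suc k) = ctrw_chain a b (ctrw_next a b x (fst (\<omega> 0))) (\<lambda>n. \<omega> (Suc n)) k"
  by (induction k) simp_all

lemma jt_Suc': "ctrw_jump_time a b \<sigma> x \<omega> (Suc k) =
   ctrw_hold a b \<sigma> x (snd (\<omega> 0)) + ctrw_jump_time a b \<sigma> (ctrw_next a b x (fst (\<omega> 0))) (\<lambda>n. \<omega> (Suc n)) k"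
  unfolding ctrw_jump_time_def sum.lessThan_Suc_shift by (simp add: chain_Suc' del: ctrw_chain.simps(2))

lemma emeasure_decomp:
  assumes A: "A \<in> sets ctrw_space"
  shows "emeasure ctrw_space A = (\<integral>\<^sup>+x. emeasure ctrw_space {\<omega>. case_nat x \<omega> \<in> A} \<partial>ctrw_step_measure)"
proof -
  interpret P: pair_sigma_finite ctrw_step_measure SQ.S
    using prob_space_imp_sigma_finite[OF prob_step] prob_space_imp_sigma_finite[OF SQ.P.prob_space_axioms]
    by (intro pair_sigma_finite.intro)
  let ?f = "\<lambda>(s, \<omega>). case_nat s \<omega>"
  have mf: "?f \<in> measurable (ctrw_step_measure \<Otimes>\<^sub>M SQ.S) SQ.S" by measurable
  have "emeasure ctrw_space A = emeasure (distr (ctrw_step_measure \<Otimes>\<^sub>M SQ.S) SQ.S ?f) A"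
    unfolding ctrw_space_def SQ.PiM_iter ..
  also have "\<dots> = emeasure (ctrw_step_measure \<Otimes>\<^sub>M SQ.S) (?f -` A \<inter> space (ctrw_step_measure \<Otimes>\<^sub>M SQ.S))"
    using A by (simp add: emeasure_distr[OF mf] ctrw_space_def)
  also have "\<dots> = (\<integral>\<^sup>+x. emeasure SQ.S (Pair x -` (?f -` A \<inter> space (ctrw_step_measure \<Otimes>\<^sub>M SQ.S))) \<partial>ctrw_step_measure)"
    using A mf by (intro SQ.emeasure_pair_measure_alt) (simp add: ctrw_space_def)
  also have "\<dots> = (\<integral>\<^sup>+x. emeasure ctrw_space {\<omega>. case_nat x \<omega> \<in> A} \<partial>ctrw_step_measure)"
    by (intro nn_integral_cong arg_cong2[where f=emeasure]) (auto simp: ctrw_space_def space_pair_measure space_PiM)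
  finally show ?thesis .
qed

definition Bq :: "real \<Rightarrow> real \<Rightarrow> real \<Rightarrow> real \<Rightarrow> real" where
  "Bq H lam s e = (if lam * H = 1 then exp (- lam * s) * e
     else exp (- lam * s) * exp ((lam * H - 1) * e) / (lam * H - 1))"

lemma Fp_lin: "Fp H lam c s e = - exp (- e) - c * Bq H lam s e"
  by (simp add: Fp_def Bq_def)

lemma Kf_avg: "Kf H lam ((c1 + c2) / 2) s = (Kf H lam c1 s + Kf H lam c2 s) / 2"
  by (simp add: Kf_def Fp_lin field_simps)

lemma step_int:
  assumes H: "0 < H" and lam: "0 \<le> lam" and cf: "\<And>i. 0 \<le> cf i \<and> cf i \<le> 1"
  shows "(\<integral>\<^sup>+x. ennreal (hh lam (cf (fst x)) (s - H * snd x)) \<partial>ctrw_step_measure)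
     = ennreal (Kf H lam ((cf True + cf False) / 2) s)"
proof -
  let ?D = "density lborel (\<lambda>x. ennreal (exponential_density 1 x))"
  interpret D: sigma_finite_measure ?D
    by (rule prob_space_imp_sigma_finite[OF prob_space_exponential_density]) simp
  have mh: "(\<lambda>x. ennreal (hh lam (cf (fst x)) (s - H * snd x))) \<in>
       borel_measurable (measure_pmf (bernoulli_pmf (1/2)) \<Otimes>\<^sub>M ?D)"
    by (rule measurable_compose_countable'[where I=UNIV and g=fst])
       (auto simp: hh_def measurable_cong_sets[OF sets_pair_measure_cong[OF sets_measure_pmf_count_space refl] refl])
  have inner: "(\<integral>\<^sup>+e. ennreal (hh lam (cf i) (s - H * e)) \<partial>?D) = ennreal (Kf H lam (cf i) s)"
     and nn: "0 \<le> Kf H lam (cf i) s" for i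
  proof -
    have "(\<integral>\<^sup>+e. ennreal (hh lam (cf i) (s - H * e)) \<partial>?D)
       = (\<integral>\<^sup>+e. ennreal (exponential_density 1 e) * ennreal (hh lam (cf i) (s - H * e)) \<partial>lborel)"
      by (rule nn_integral_density) (auto simp: hh_def)
    thus "(\<integral>\<^sup>+e. ennreal (hh lam (cf i) (s - H * e)) \<partial>?D) = ennreal (Kf H lam (cf i) s)"
      using Kf_int[OF H lam, of "cf i" s] cf[of i] by simp
    show "0 \<le> Kf H lam (cf i) s" using Kf_int[OF H lam, of "cf i" s] cf[of i] by simp
  qed
  have "(\<integral>\<^sup>+x. ennreal (hh lam (cf (fst x)) (s - H * snd x)) \<partial>ctrw_step_measure)
     = (\<integral>\<^sup>+i. \<integral>\<^sup>+e. ennreal (hh lam (cf i) (s - H * e)) \<partial>?D \<partial>measure_pmf (bernoulli_pmf (1/2)))"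
    unfolding ctrw_step_measure_def using D.nn_integral_fst[OF mh] by simp
  also have "\<dots> = (\<integral>\<^sup>+i. ennreal (Kf H lam (cf i) s) \<partial>measure_pmf (bernoulli_pmf (1/2)))"
    by (simp only: inner)
  also have "\<dots> = ennreal (Kf H lam (cf True) s) * ennreal (1/2) + ennreal (Kf H lam (cf False) s) * ennreal (1 - 1/2)"
    by (rule nn_integral_bernoulli_pmf) auto
  also have "\<dots> = ennreal (Kf H lam ((cf True + cf False) / 2) s)"
    using nn[of True] nn[of False]
    by (simp only: Kf_avg ennreal_mult[symmetric] ennreal_plus[symmetric] mult_nonneg_nonneg)
       (simp add: field_simps)
  finally show ?thesis .
qed

definition Hf :: "int \<Rightarrow> int \<Rightarrow> (int \<Rightarrow> real) \<Rightarrow> int \<Rightarrow> real" where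
  "Hf a b \<sigma> y = (if y = a \<or> y = b then 2 * \<sigma> y else \<sigma> y)"

lemma hold_eq: "ctrw_hold a b \<sigma> y e = Hf a b \<sigma> y * e"
  by (simp add: ctrw_hold_def Hf_def)

lemma next_in: "y \<in> {a..b} \<Longrightarrow> a < b \<Longrightarrow> ctrw_next a b y i \<in> {a..b}"
  by (auto simp: ctrw_next_def)

lemma prob_ctrw: "prob_space ctrw_space"
  unfolding ctrw_space_def by (rule SQ.P.prob_space_axioms)

lemma ex_le_Suc: "(\<exists>k\<le>Suc n. P k) \<longleftrightarrow> P 0 \<or> (\<exists>k\<le>n. P (Suc k))"
  by (metis Suc_le_mono le0 not0_implies_Suc)

lemma hitset_shift:
  assumes "\<not> (y \<in> S \<and> 0 \<le> s)"
  shows "{\<omega>. case_nat x \<omega> \<in> hitset a b \<sigma> y S s (Suc n)} =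
     hitset a b \<sigma> (ctrw_next a b y (fst x)) S (s - ctrw_hold a b \<sigma> y (snd x)) n"
proof -
  have sh: "(\<lambda>n. case_nat x \<omega> (Suc n)) = \<omega>" for \<omega> :: "nat \<Rightarrow> bool \<times> real" by simp
  show ?thesis
    using assms unfolding hitset_def
    by (auto simp only: ex_le_Suc chain_Suc' jt_Suc' sh space_ctrw nat.case ctrw_chain.simps(1)
        ctrw_jump_time_def[of _ _ _ _ _ 0] lessThan_0 sum.empty)
qed

lemma main_bound:
  assumes ab: "a < b" and sig: "\<forall>y\<in>{a..b}. 0 < \<sigma> y" and lam: "0 \<le> lam"
    and c01: "\<And>y. y \<in> {a..b} \<Longrightarrow> 0 \<le> c y \<and> c y \<le> 1"
    and cS: "\<And>y. y \<in> S \<Longrightarrow> c y = 0"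
    and sup: "\<And>y. y \<in> {a..b} \<Longrightarrow> y \<notin> S \<Longrightarrow>
       c y * (1 - lam * Hf a b \<sigma> y) \<le> (c (ctrw_next a b y True) + c (ctrw_next a b y False)) / 2"
  shows "y \<in> {a..b} \<Longrightarrow> emeasure ctrw_space (hitset a b \<sigma> y S s n) \<le> ennreal (hh lam (c y) s)"
proof (induction n arbitrary: y s)
  case 0
  show ?case
  proof (cases "y \<in> S \<and> 0 \<le> s")
    case True
    then have "hh lam (c y) s = 1" using cS by (simp add: hh_def)
    thus ?thesis using prob_space.emeasure_le_1[OF prob_ctrw] by simp
  next
    case False
    then have "hitset a b \<sigma> y S s 0 = {}" by (auto simp: hitset_def ctrw_jump_time_def)
    thus ?thesis by simp
  qed
next
  case (Suc n)
  show ?case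
  proof (cases "y \<in> S \<and> 0 \<le> s")
    case True
    then have "hh lam (c y) s = 1" using cS by (simp add: hh_def)
    thus ?thesis using prob_space.emeasure_le_1[OF prob_ctrw] by simp
  next
    case False
    have H: "0 < Hf a b \<sigma> y" using sig Suc.prems by (auto simp: Hf_def)
    have cf: "0 \<le> c (ctrw_next a b y i) \<and> c (ctrw_next a b y i) \<le> 1" for i
      using c01 next_in[OF Suc.prems ab] by blast
    have "emeasure ctrw_space (hitset a b \<sigma> y S s (Suc n))
        = (\<integral>\<^sup>+x. emeasure ctrw_space (hitset a b \<sigma> (ctrw_next a b y (fst x)) S (s - ctrw_hold a b \<sigma> y (snd x)) n) \<partial>ctrw_step_measure)"
      by (simp add: emeasure_decomp[OF hitset_sets] hitset_shift[OF False])
    also have "\<dots> \<le> (\<integral>\<^sup>+x. ennreal (hh lam (c (ctrw_next a b y (fst x))) (s - Hf a b \<sigma> y * snd x)) \<partial>ctrw_step_measure)"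
      by (intro nn_integral_mono) (simp add: hold_eq Suc.IH[OF next_in[OF Suc.prems ab]])
    also have "\<dots> = ennreal (Kf (Hf a b \<sigma> y) lam ((c (ctrw_next a b y True) + c (ctrw_next a b y False)) / 2) s)"
      by (rule step_int[OF H lam cf])
    also have "\<dots> \<le> ennreal (hh lam (c y) s)"
    proof (cases "s < 0")
      case True thus ?thesis by (simp add: Kf_def)
    next
      case sn: False
      with False have "y \<notin> S" by simp
      have "Kf (Hf a b \<sigma> y) lam ((c (ctrw_next a b y True) + c (ctrw_next a b y False)) / 2) s
           \<le> 1 - c y * exp (- lam * s)"
        using Kf_le[OF H lam _ _ _ sup[OF Suc.prems \<open>y \<notin> S\<close>]] c01[OF Suc.prems] cf[of True] cf[of False] sn
        by simp
      thus ?thesis using sn by (simp add: hh_def ennreal_leI)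
    qed
    finally show ?thesis .
  qed
qed

lemma hit_bound:
  assumes ab: "a < b" and sig: "\<forall>y\<in>{a..b}. 0 < \<sigma> y" and lam: "0 \<le> lam"
    and c01: "\<And>y. y \<in> {a..b} \<Longrightarrow> 0 \<le> c y \<and> c y \<le> 1"
    and cS: "\<And>y. y \<in> S \<Longrightarrow> c y = 0"
    and sup: "\<And>y. y \<in> {a..b} \<Longrightarrow> y \<notin> S \<Longrightarrow>
       c y * (1 - lam * Hf a b \<sigma> y) \<le> (c (ctrw_next a b y True) + c (ctrw_next a b y False)) / 2"
    and x: "x \<in> {a..b}"
  shows "ctrw_hit_prob a b \<sigma> x S t \<le> hh lam (c x) t"
proof -
  let ?A = "\<lambda>n. hitset a b \<sigma> x S t n"
  have eqU: "{\<omega> \<in> space ctrw_space. \<exists>n. ctrw_chain a b x \<omega> n \<in> S \<and> ctrw_jump_time a b \<sigma> x \<omega> n \<le> t} = (\<Union>n. ?A n)"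
    by (auto simp: hitset_def)
  have inc: "incseq ?A" by (auto simp: incseq_def hitset_def intro: order_trans)
  have "emeasure ctrw_space (\<Union>n. ?A n) = (SUP n. emeasure ctrw_space (?A n))"
    using SUP_emeasure_incseq[of ?A ctrw_space] inc hitset_sets by (metis image_subset_iff)
  also have "\<dots> \<le> ennreal (hh lam (c x) t)"
    by (intro SUP_least main_bound[OF ab sig lam c01 cS sup x]) auto
  finally have le: "emeasure ctrw_space (\<Union>n. ?A n) \<le> ennreal (hh lam (c x) t)" .
  have hnn: "0 \<le> hh lam (c x) t"
  proof -
    have "c x * exp (- lam * t) \<le> 1" if "0 \<le> t"
      using c01[OF x] lam that by (intro mult_le_one) auto
    thus ?thesis by (auto simp: hh_def)
  qed
  have "ennreal (measure ctrw_space (\<Union>n. ?A n)) \<le> ennreal (hh lam (c x) t)"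
    using le finite_measure.emeasure_eq_measure[OF prob_space.finite_measure[OF prob_ctrw]] by metis
  then have "measure ctrw_space (\<Union>n. ?A n) \<le> hh lam (c x) t" using hnn by (simp add: ennreal_le_iff)
  thus ?thesis unfolding ctrw_hit_prob_def eqU .
qed

lemma exp_bound: "0 \<le> (u::real) \<Longrightarrow> 1 - exp (- u) \<le> u"
  using exp_ge_add_one_self[of "- u"] by simp

lemma part1:
  assumes ab: "a < b" and sig: "\<forall>y\<in>{a..b}. 0 < \<sigma> y"
    and x: "a \<le> x" "x \<le> z" and z: "z < b" and t: "0 < t"
  shows "ctrw_hit_prob a b \<sigma> x {b} t \<le> t / (2 * real_of_int (b - z) * \<sigma> z)"
proof -
  define lam where "lam = 1 / (2 * real_of_int (b - z) * \<sigma> z)"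
  define c where "c y = (if y \<le> z then 1 else real_of_int (b - y) / real_of_int (b - z))" for y
  have sz: "0 < \<sigma> z" using sig x z by auto
  have bz: "0 < real_of_int (b - z)" using z by simp
  have lam: "0 \<le> lam" using sz bz by (simp add: lam_def)
  have c01: "0 \<le> c y \<and> c y \<le> 1" if "y \<in> {a..b}" for y
    using that bz by (auto simp: c_def field_simps)
  have cS: "c y = 0" if "y \<in> {b}" for y using that z by (simp add: c_def)
  have sup: "c y * (1 - lam * Hf a b \<sigma> y) \<le> (c (ctrw_next a b y True) + c (ctrw_next a b y False)) / 2"
    if y: "y \<in> {a..b}" "y \<notin> {b}" for y
  proof -
    have "0 < \<sigma> y" using sig y by auto
    then have Hnn: "0 \<le> lam * Hf a b \<sigma> y" using lam by (auto simp: Hf_def)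
    consider "y < z" | "y = z" "z = a" | "y = z" "a < z" | "z < y" using x by linarith
    then show ?thesis
    proof cases
      case 1
      then have "c (ctrw_next a b y True) = 1" "c (ctrw_next a b y False) = 1" "c y = 1"
        by (auto simp: c_def ctrw_next_def)
      thus ?thesis using Hnn by simp
    next
      case 2
      have e1: "ctrw_next a b y i = a + 1" for i using 2 by (simp add: ctrw_next_def)
      have cy: "c y = 1" using 2 by (simp add: c_def)
      have ca: "c (a + 1) = real_of_int (b - a - 1) / real_of_int (b - a)"
        using 2 by (simp add: c_def)
      have l1: "lam * Hf a b \<sigma> y = 1 / real_of_int (b - a)"
        using 2 ab sz by (simp add: lam_def Hf_def field_simps)
      have l2: "1 - 1 / real_of_int (b - a) = real_of_int (b - a - 1) / real_of_int (b - a)"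
        using ab by (simp add: field_simps)
      have "c y * (1 - lam * Hf a b \<sigma> y) = real_of_int (b - a - 1) / real_of_int (b - a)"
        by (simp only: cy l1 l2)
      also have "\<dots> = (c (ctrw_next a b y True) + c (ctrw_next a b y False)) / 2"
        by (simp only: e1 ca add_divide_distrib field_sum_of_halves)
      finally show ?thesis by simp
    next
      case 3
      have "y \<noteq> a" "y \<noteq> b" using 3 z by auto
      then have e1: "ctrw_next a b y True = z + 1" "ctrw_next a b y False = z - 1"
        using 3 by (auto simp: ctrw_next_def)
      have cy: "c y = 1" "c (z - 1) = 1" using 3 by (auto simp: c_def)
      have cz: "c (z + 1) = real_of_int (b - z - 1) / real_of_int (b - z)"
        by (simp add: c_def)
      have l1: "lam * Hf a b \<sigma> y = 1 / (2 * real_of_int (b - z))"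
        using 3 \<open>y \<noteq> a\<close> \<open>y \<noteq> b\<close> sz bz by (simp add: lam_def Hf_def field_simps)
      have l2: "1 - 1 / (2 * real_of_int (b - z)) = (real_of_int (b - z - 1) / real_of_int (b - z) + 1) / 2"
        using bz by (simp add: field_simps)
      have "c y * (1 - lam * Hf a b \<sigma> y) = (real_of_int (b - z - 1) / real_of_int (b - z) + 1) / 2"
        by (simp only: cy l1 l2 mult_1)
      also have "\<dots> = (c (ctrw_next a b y True) + c (ctrw_next a b y False)) / 2"
        by (simp only: e1 cz cy)
      finally show ?thesis by simp
    next
      case 4
      have "y \<noteq> a" "y \<noteq> b" "y < b" using 4 x y by auto
      then have e1: "ctrw_next a b y True = y + 1" "ctrw_next a b y False = y - 1"
        by (auto simp: ctrw_next_def)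
      have c1: "c (y + 1) = (real_of_int (b - y) - 1) / real_of_int (b - z)"
        and c2: "c (y - 1) = (real_of_int (b - y) + 1) / real_of_int (b - z)"
        and c3: "c y = real_of_int (b - y) / real_of_int (b - z)"
        using 4 bz by (auto simp: c_def field_simps)
      have avg: "(c (ctrw_next a b y True) + c (ctrw_next a b y False)) / 2 = c y"
      proof -
        have g: "((X - 1) / D + (X + 1) / D) / 2 = X / D" for X D :: real
          by (cases "D = 0") (simp_all add: field_simps)
        show ?thesis unfolding e1 c1 c2 c3 by (rule g)
      qed
      have "0 \<le> c y" using c01 y by blast
      then have "0 \<le> c y * (lam * Hf a b \<sigma> y)" using Hnn by simp
      then have "c y * (1 - lam * Hf a b \<sigma> y) \<le> c y"
        by (simp add: right_diff_distrib)
      thus ?thesis using avg by simp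
    qed
  qed
  have "ctrw_hit_prob a b \<sigma> x {b} t \<le> hh lam (c x) t"
    by (rule hit_bound[OF ab sig lam c01 cS sup]) (use x z in auto)
  also have "\<dots> = 1 - exp (- (lam * t))" using x t by (simp add: hh_def c_def)
  also have "\<dots> \<le> lam * t" using lam t by (intro exp_bound) simp
  also have "\<dots> = t / (2 * real_of_int (b - z) * \<sigma> z)" by (simp add: lam_def)
  finally show ?thesis .
qed

lemma part2:
  assumes ab: "a < b" and sig: "\<forall>y\<in>{a..b}. 0 < \<sigma> y"
    and x: "a < x" "x < b" and t: "0 < t"
  shows "ctrw_hit_prob a b \<sigma> x {a, b} t \<le> t / (real_of_int (min (x - a) (b - x)) * \<sigma> x)"
proof -
  define m where "m = real_of_int (min (x - a) (b - x))"
  define lam where "lam = 1 / (m * \<sigma> x)"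
  define c where "c y = (if y \<le> x then real_of_int (y - a) / real_of_int (x - a)
      else real_of_int (b - y) / real_of_int (b - x))" for y
  have sx: "0 < \<sigma> x" using sig x by auto
  have m0: "1 \<le> m" using x by (simp add: m_def)
  have xa: "0 < real_of_int (x - a)" and bx: "0 < real_of_int (b - x)" using x by simp_all
  have lam: "0 \<le> lam" using sx m0 by (simp add: lam_def)
  have c01: "0 \<le> c y \<and> c y \<le> 1" if "y \<in> {a..b}" for y
    using that xa bx by (auto simp: c_def field_simps)
  have cS: "c y = 0" if "y \<in> {a, b}" for y using that x by (auto simp: c_def)
  have g: "((X - 1) / D + (X + 1) / D) / 2 = X / D" for X D :: real
    by (cases "D = 0") (simp_all add: field_simps)
  have g': "((X + 1) / D + (X - 1) / D) / 2 = X / D" for X D :: real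
    by (cases "D = 0") (simp_all add: field_simps)
  have sup: "c y * (1 - lam * Hf a b \<sigma> y) \<le> (c (ctrw_next a b y True) + c (ctrw_next a b y False)) / 2"
    if y: "y \<in> {a..b}" "y \<notin> {a, b}" for y
  proof -
    have "0 < \<sigma> y" using sig y by auto
    then have Hnn: "0 \<le> lam * Hf a b \<sigma> y" using lam by (auto simp: Hf_def)
    have ya: "y \<noteq> a" "y \<noteq> b" using y by auto
    then have e1: "ctrw_next a b y True = y + 1" "ctrw_next a b y False = y - 1"
      by (auto simp: ctrw_next_def)
    have harm: "c y * (1 - lam * Hf a b \<sigma> y) \<le> (c (ctrw_next a b y True) + c (ctrw_next a b y False)) / 2"
      if avg: "(c (ctrw_next a b y True) + c (ctrw_next a b y False)) / 2 = c y"
    proof -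
      have "0 \<le> c y" using c01 y by blast
      then have "0 \<le> c y * (lam * Hf a b \<sigma> y)" using Hnn by simp
      then have "c y * (1 - lam * Hf a b \<sigma> y) \<le> c y"
        by (simp add: right_diff_distrib)
      thus ?thesis using avg by simp
    qed
    consider "y < x" | "y = x" | "x < y" by linarith
    then show ?thesis
    proof cases
      case 1
      have c1: "c (y + 1) = (real_of_int (y - a) + 1) / real_of_int (x - a)"
        and c2: "c (y - 1) = (real_of_int (y - a) - 1) / real_of_int (x - a)"
        and c3: "c y = real_of_int (y - a) / real_of_int (x - a)"
        using 1 by (auto simp: c_def field_simps)
      show ?thesis
        by (rule harm) (simp only: e1 c1 c2 c3 g')
    next
      case 3
      have c1: "c (y + 1) = (real_of_int (b - y) - 1) / real_of_int (b - x)"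
        and c3: "c y = real_of_int (b - y) / real_of_int (b - x)"
        using 3 bx by (auto simp: c_def field_simps)
      have c2: "c (y - 1) = (real_of_int (b - y) + 1) / real_of_int (b - x)"
      proof (cases "y - 1 \<le> x")
        case True
        then have "y = x + 1" using 3 by simp
        thus ?thesis using xa bx by (simp add: c_def)
      next
        case False
        then have "real_of_int (b - (y - 1)) = real_of_int (b - y) + 1" by simp
        thus ?thesis using False by (simp add: c_def)
      qed
      show ?thesis
        by (rule harm) (simp only: e1 c1 c2 c3 g)
    next
      case 2
      have c1: "c (y + 1) = 1 - 1 / real_of_int (b - x)"
        and c2: "c (y - 1) = 1 - 1 / real_of_int (x - a)"
        and c3: "c y = 1"
        using 2 xa bx by (auto simp: c_def field_simps)
      have l1: "lam * Hf a b \<sigma> y = 1 / m"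
        using 2 ya sx m0 by (simp add: lam_def Hf_def field_simps)
      have i1: "1 / real_of_int (b - x) \<le> 1 / m" using m0 bx
        by (intro divide_left_mono) (auto simp: m_def)
      have i2: "1 / real_of_int (x - a) \<le> 1 / m" using m0 xa
        by (intro divide_left_mono) (auto simp: m_def)
      show ?thesis unfolding e1 c1 c2 c3 l1 using i1 i2 by simp
    qed
  qed
  have "ctrw_hit_prob a b \<sigma> x {a, b} t \<le> hh lam (c x) t"
    by (rule hit_bound[OF ab sig lam c01 cS sup]) (use x in auto)
  also have "\<dots> = 1 - exp (- (lam * t))" using x t xa by (simp add: hh_def c_def)
  also have "\<dots> \<le> lam * t" using lam t by (intro exp_bound) simp
  also have "\<dots> = t / (real_of_int (min (x - a) (b - x)) * \<sigma> x)" by (simp add: lam_def m_def)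
  finally show ?thesis .
qed

theorem proposition2p2:
  fixes a b :: int and \<sigma> :: "int \<Rightarrow> real"
  assumes "a < b"
    and "\<forall>y\<in>{a..b}. 0 < \<sigma> y"
  shows "(\<forall>x z t. a \<le> x \<and> x < b \<and> x \<le> z \<and> z < b \<and> 0 < t \<longrightarrow>
            ctrw_hit_prob a b \<sigma> x {b} t \<le> t / (2 * real_of_int (b - z) * \<sigma> z))
       \<and> (\<forall>x t. a < x \<and> x < b \<and> 0 < t \<longrightarrow>
            ctrw_hit_prob a b \<sigma> x {a, b} t \<le> t / (real_of_int (min (x - a) (b - x)) * \<sigma> x))"
  using part1[OF assms] part2[OF assms] by blast

end
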